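(* Let $(C,S)$ be a partially shaded tree, where $C$ is the support tree of a vertex of a non-degenerate transportation polytope $\mathrm{TP}(u,v)$. If some supply node satisfies (SIN) in $(C,S)$, then no demand node is incident in $C$ only to shaded $+$edges. In particular, every well-connected demand node is incident to a shaded $-$edge.
   Context: Let $N_1,N_2\ge1$, $u\in\mathbb{R}_{>0}^{N_1}$, $v\in\mathbb{R}_{>0}^{N_2}$ with $\sum_iu_i=\sum_jv_j$, and $\mathrm{TP}(u,v)=\{y\in\mathbb{R}^{N_1\times N_2}: \sum_j y_{ij}=u_i\ \forall i,\ \sum_i y_{ij}=v_j\ \forall j,\ y\ge 0\}$. View supply nodes $\sigma^1,\dots,\sigma^{N_1}$ and demand nodes $\delta^1,\dots,\delta^{N_2}$ as the two sides of $K_{N_1,N_2}$; the support graph of $y$ consists of the edges $\{\sigma^i,\delta^j\}$ with $y_{ij}>0$. $\mathrm{TP}(u,v)$ is non-degenerate if there are no nonempty proper subsets $I\subsetneq\{1,\dots,N_1\}$, $J\subsetneq\{1,\dots,N_2\}$ with $\sum_{i\in I}u_i=\sum_{j\in J}v_j$; then the support graph of each vertex is a spanning tree of $K_{N_1,N_2}$ determining the vertex; these are called trees. Fix a tree $F$ and a demand node $\delta^*$. Label the edges of $F$: each edge of $F$ lies on a path in $F$ starting at $\delta^*$, and edges along such paths are labeled alternately $+,-,+,\dots$ beginning with $+$ at $\delta^*$ (so each supply node is incident in $F$ to exactly one $+$edge, each demand node other than $\delta^*$ to exactly one $-$edge, and $\delta^*$ only to $+$edges). A partially shaded tree is a pair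 $(C,S)$ with $C$ a tree and $S\subseteq C\cap F$ the shaded edges (others unshaded); shaded edges carry their labels from $F$. A demand node is well-connected if it is not incident to an unshaded edge of $C$. For a supply node $\sigma$, every edge of $C$ lies on a unique path in $C$ starting at $\sigma$; number edges along such paths starting with $1$ at edges incident to $\sigma$, and call an edge odd (w.r.t. $\sigma$) if its number is odd. A supply node $\sigma$ satisfies (SIN) in $(C,S)$ if every edge of $C$ that is odd with respect to $\sigma$ is either unshaded or a shaded $-$edge incident to a well-connected demand node. *)

theory Defs
  imports Main "HOL-Library.Extended_Real"
begin

text \<open>Supply nodes are indexed 0..<N1, demand nodes 0..<N2. A point of
  R^(N1 x N2) is a function y :: nat => nat => real that vanishes outside the index range.
  An edge {sigma^i, delta^j} of K_{N1,N2} is represented by the pair (i,j).\<close>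

datatype node = Sup nat | Dem nat

definition TP :: "nat \<Rightarrow> nat \<Rightarrow> (nat \<Rightarrow> real) \<Rightarrow> (nat \<Rightarrow> real) \<Rightarrow> (nat \<Rightarrow> nat \<Rightarrow> real) set" where
  "TP N1 N2 u v = {y. (\<forall>i j. (i < N1 \<and> j < N2) \<or> y i j = 0)
      \<and> (\<forall>i<N1. (\<Sum>j<N2. y i j) = u i)
      \<and> (\<forall>j<N2. (\<Sum>i<N1. y i j) = v j)
      \<and> (\<forall>i j. y i j \<ge> 0)}"

definition is_vertex :: "(nat \<Rightarrow> nat \<Rightarrow> real) set \<Rightarrow> (nat \<Rightarrow> nat \<Rightarrow> real) \<Rightarrow> bool" where
  "is_vertex P y \<longleftrightarrow> y \<in> P \<and>
     \<not> (\<exists>a\<in>P. \<exists>b\<in>P. \<exists>t::real. 0 < t \<and> t < 1 \<and> a \<noteq> b \<and>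
           y = (\<lambda>i j. t * a i j + (1 - t) * b i j))"

definition non_degenerate :: "nat \<Rightarrow> nat \<Rightarrow> (nat \<Rightarrow> real) \<Rightarrow> (nat \<Rightarrow> real) \<Rightarrow> bool" where
  "non_degenerate N1 N2 u v \<longleftrightarrow>
     (\<forall>I J. I \<noteq> {} \<and> I \<subset> {..<N1} \<and> J \<noteq> {} \<and> J \<subset> {..<N2} \<longrightarrow> sum u I \<noteq> sum v J)"

definition support :: "nat \<Rightarrow> nat \<Rightarrow> (nat \<Rightarrow> nat \<Rightarrow> real) \<Rightarrow> (nat \<times> nat) set" where
  "support N1 N2 y = {(i,j). i < N1 \<and> j < N2 \<and> y i j > 0}"

definition is_tree :: "nat \<Rightarrow> nat \<Rightarrow> (nat \<Rightarrow> real) \<Rightarrow> (nat \<Rightarrow> real) \<Rightarrow> (nat \<times> nat) set \<Rightarrow> bool" where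
  "is_tree N1 N2 u v C \<longleftrightarrow> (\<exists>y. is_vertex (TP N1 N2 u v) y \<and> C = support N1 N2 y)"

definition links :: "nat \<times> nat \<Rightarrow> node \<Rightarrow> node \<Rightarrow> bool" where
  "links e a b \<longleftrightarrow> (a = Sup (fst e) \<and> b = Dem (snd e)) \<or> (a = Dem (snd e) \<and> b = Sup (fst e))"

definition path_in :: "(nat \<times> nat) set \<Rightarrow> node list \<Rightarrow> bool" where
  "path_in C ns \<longleftrightarrow> distinct ns \<and>
     (\<forall>k. Suc k < length ns \<longrightarrow> (\<exists>e\<in>C. links e (ns ! k) (ns ! Suc k)))"

definition edge_pos :: "(nat \<times> nat) set \<Rightarrow> node \<Rightarrow> nat \<times> nat \<Rightarrow> nat \<Rightarrow> bool" where
  "edge_pos C x e k \<longleftrightarrow> e \<in> C \<and> (\<exists>ns. path_in C ns \<and> ns \<noteq> [] \<and> hd ns = x \<and>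
       1 \<le> k \<and> k < length ns \<and> links e (ns ! (k - 1)) (ns ! k))"

definition plus_edge :: "(nat \<times> nat) set \<Rightarrow> nat \<Rightarrow> nat \<times> nat \<Rightarrow> bool" where
  "plus_edge F ds e \<longleftrightarrow> (\<exists>k. odd k \<and> edge_pos F (Dem ds) e k)"

definition minus_edge :: "(nat \<times> nat) set \<Rightarrow> nat \<Rightarrow> nat \<times> nat \<Rightarrow> bool" where
  "minus_edge F ds e \<longleftrightarrow> (\<exists>k. even k \<and> edge_pos F (Dem ds) e k)"

definition odd_wrt :: "(nat \<times> nat) set \<Rightarrow> nat \<Rightarrow> nat \<times> nat \<Rightarrow> bool" where
  "odd_wrt C s e \<longleftrightarrow> (\<exists>k. odd k \<and> edge_pos C (Sup s) e k)"

definition well_connected :: "(nat \<times> nat) set \<Rightarrow> (nat \<times> nat) set \<Rightarrow> nat \<Rightarrow> bool" where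
  "well_connected C S j \<longleftrightarrow> \<not> (\<exists>i. (i, j) \<in> C \<and> (i, j) \<notin> S)"

definition SIN :: "(nat \<times> nat) set \<Rightarrow> nat \<Rightarrow> (nat \<times> nat) set \<Rightarrow> (nat \<times> nat) set \<Rightarrow> nat \<Rightarrow> bool" where
  "SIN F ds C S s \<longleftrightarrow> (\<forall>e\<in>C. odd_wrt C s e \<longrightarrow>
      (e \<notin> S \<or> (e \<in> S \<and> minus_edge F ds e \<and> well_connected C S (snd e))))"

end

theory Submission
  imports Defs
begin

fun edge :: "node \<Rightarrow> node \<Rightarrow> nat \<times> nat" where
  "edge (Sup i) (Dem j) = (i,j)"
| "edge (Dem j) (Sup i) = (i,j)"
| "edge _ _ = (0,0)"

fun steps :: "node list \<Rightarrow> (nat\<times>nat) list" where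
  "steps (x # y # r) = edge x y # steps (y # r)"
| "steps _ = []"

fun linked :: "(nat\<times>nat) set \<Rightarrow> node list \<Rightarrow> bool" where
  "linked C (x # y # r) = ((\<exists>e\<in>C. links e x y) \<and> linked C (y # r))"
| "linked C _ = True"

fun zsum :: "(nat\<times>nat) list \<Rightarrow> nat\<times>nat \<Rightarrow> real" where
  "zsum [] e = 0"
| "zsum (a # r) e = (if a = e then 1 else 0) - zsum r e"

fun isDem :: "node \<Rightarrow> bool" where
  "isDem (Dem _) = True" | "isDem (Sup _) = False"

lemma links_edge: "links e x y \<Longrightarrow> edge x y = e"
  by (cases e) (auto simp: links_def)

lemma links_sym: "links e x y \<longleftrightarrow> links e y x"
  by (auto simp: links_def)

lemma links_isDem: "links e x y \<Longrightarrow> isDem x \<longleftrightarrow> \<not> isDem y"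
  by (auto simp: links_def)

lemma edge_sym: "edge x y = edge y x" by (cases x; cases y) auto

lemma linked_nth: "linked C ns \<longleftrightarrow> (\<forall>k. Suc k < length ns \<longrightarrow> (\<exists>e\<in>C. links e (ns ! k) (ns ! Suc k)))"
proof (induction C ns rule: linked.induct)
  case (1 C x y r)
  show ?case
  proof
    assume L: "linked C (x # y # r)"
    show "\<forall>k. Suc k < length (x # y # r) \<longrightarrow> (\<exists>e\<in>C. links e ((x # y # r) ! k) ((x # y # r) ! Suc k))"
    proof (intro allI impI)
      fix k assume k: "Suc k < length (x # y # r)"
      show "\<exists>e\<in>C. links e ((x # y # r) ! k) ((x # y # r) ! Suc k)"
      proof (cases k)
        case 0 then show ?thesis using L by simp
      next
        case (Suc k')
        have "linked C (y # r)" using L by simp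
        then have "\<forall>k. Suc k < length (y # r) \<longrightarrow> (\<exists>e\<in>C. links e ((y # r) ! k) ((y # r) ! Suc k))"
          using 1 by blast
        then show ?thesis using k Suc by simp
      qed
    qed
  next
    assume R: "\<forall>k. Suc k < length (x # y # r) \<longrightarrow> (\<exists>e\<in>C. links e ((x # y # r) ! k) ((x # y # r) ! Suc k))"
    have a: "\<exists>e\<in>C. links e x y" using R[rule_format, of 0] by simp
    have "\<forall>k. Suc k < length (y # r) \<longrightarrow> (\<exists>e\<in>C. links e ((y # r) ! k) ((y # r) ! Suc k))"
    proof (intro allI impI)
      fix k assume "Suc k < length (y # r)"
      then show "\<exists>e\<in>C. links e ((y # r) ! k) ((y # r) ! Suc k)"
        using R[rule_format, of "Suc k"] by simp
    qed
    with 1 a show "linked C (x # y # r)" by simp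
  qed
qed auto

lemma path_in_linked: "path_in C ns \<longleftrightarrow> distinct ns \<and> linked C ns"
  by (simp add: path_in_def linked_nth)

lemma linked_parity: "linked C w \<Longrightarrow> t < length w \<Longrightarrow> isDem (w ! t) \<longleftrightarrow> (isDem (hd w) \<longleftrightarrow> even t)"
proof (induction t arbitrary: w)
  case 0 then show ?case by (cases w) auto
next
  case (Suc t)
  obtain x y r where w: "w = x # y # r"
  proof (cases w)
    case Nil then show ?thesis using Suc.prems by simp
  next
    case (Cons x w')
    then show ?thesis using Suc.prems that by (cases w') auto
  qed
  with Suc.prems obtain e where "e \<in> C" "links e x y" "linked C (y # r)" by auto
  with Suc.IH[of "y # r"] Suc.prems w links_isDem[of e x y] show ?case by auto
qed

lemma steps_app: "steps (xs @ a # zs) = steps (xs @ [a]) @ steps (a # zs)"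
  by (induction xs rule: steps.induct) auto

lemma steps_rev: "steps (rev w) = rev (steps w)"
proof (induction w rule: steps.induct)
  case (1 x y r)
  have "steps (rev (x # y # r)) = steps (rev r @ y # [x])" by simp
  also have "\<dots> = steps (rev r @ [y]) @ steps [y, x]" by (rule steps_app)
  also have "\<dots> = rev (steps (y # r)) @ [edge x y]" using 1 by (simp add: edge_sym)
  finally show ?case by simp
qed auto

lemma linked_app: "linked C (xs @ a # zs) \<longleftrightarrow> linked C (xs @ [a]) \<and> linked C (a # zs)"
  by (induction xs rule: steps.induct) auto

lemma linked_rev: "linked C (rev w) = linked C w"
proof (induction w rule: steps.induct)
  case (1 x y r)
  have "linked C (rev (x # y # r)) = linked C (rev r @ y # [x])" by simp
  also have "\<dots> = (linked C (rev r @ [y]) \<and> linked C [y, x])" by (rule linked_app)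
  finally show ?case using 1 links_sym by auto
qed auto

lemma linked_take: "linked C w \<Longrightarrow> linked C (take n w)"
  by (auto simp: linked_nth)

lemma linked_snoc: "linked C xs \<Longrightarrow> xs \<noteq> [] \<Longrightarrow> links e (last xs) a \<Longrightarrow> e \<in> C \<Longrightarrow> linked C (xs @ [a])"
  by (induction C xs rule: linked.induct) auto

lemma steps_subset: "linked C w \<Longrightarrow> set (steps w) \<subseteq> C"
  by (induction C w rule: linked.induct) (auto dest: links_edge)

lemma steps_nodes: "linked C w \<Longrightarrow> e \<in> set (steps w) \<Longrightarrow> Sup (fst e) \<in> set w \<and> Dem (snd e) \<in> set w"
proof (induction C w rule: linked.induct)
  case (1 C x y r)
  then obtain e' where "links e' x y" by auto
  then have "edge x y = e'" by (rule links_edge)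
  with 1 \<open>links e' x y\<close> show ?case by (auto simp: links_def)
qed auto

lemma zsum_notin: "e \<notin> set l \<Longrightarrow> zsum l e = 0"
  by (induction l) auto

lemma zsum_app: "zsum (l1 @ l2) e = zsum l1 e + (-1)^length l1 * zsum l2 e"
  by (induction l1) (auto simp: algebra_simps)

lemma zsum_bound: "\<bar>zsum l e\<bar> \<le> length l"
  by (induction l) auto

lemma sum_ind_row:
  assumes "links e x y" "snd e < N2"
  shows "(\<Sum>j<N2. if e = (i,j) then 1 else 0 :: real) = (if x = Sup i then 1 else 0) + (if y = Sup i then 1 else 0)"
proof -
  obtain a b where e: "e = (a,b)" by (cases e)
  have "(\<Sum>j<N2. if e = (i,j) then 1 else 0 :: real) = (\<Sum>j<N2. if j = b then (if a = i then 1 else 0) else 0)"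
    by (rule sum.cong) (auto simp: e)
  also have "\<dots> = (if a = i then 1 else 0)" using assms e by simp
  finally show ?thesis using assms(1) e by (auto simp: links_def)
qed

lemma sum_ind_col:
  assumes "links e x y" "fst e < N1"
  shows "(\<Sum>i<N1. if e = (i,j) then 1 else 0 :: real) = (if x = Dem j then 1 else 0) + (if y = Dem j then 1 else 0)"
proof -
  obtain a b where e: "e = (a,b)" by (cases e)
  have "(\<Sum>i<N1. if e = (i,j) then 1 else 0 :: real) = (\<Sum>i<N1. if i = a then (if b = j then 1 else 0) else 0)"
    by (rule sum.cong) (auto simp: e)
  also have "\<dots> = (if b = j then 1 else 0)" using assms e by simp
  finally show ?thesis using assms(1) e by (auto simp: links_def)
qed

lemma rowsum:
  "linked C w \<Longrightarrow> C \<subseteq> {..<N1} \<times> {..<N2} \<Longrightarrow> 2 \<le> length w \<Longrightarrow>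
   (\<Sum>j<N2. zsum (steps w) (i,j)) = (if hd w = Sup i then 1 else 0) + (-1)^length w * (if last w = Sup i then 1 else 0)"
proof (induction C w rule: linked.induct)
  case (1 C x y r)
  then obtain e where e: "e \<in> C" "links e x y" by auto
  have ex: "edge x y = e" using e(2) by (rule links_edge)
  have s1: "(\<Sum>j<N2. if e = (i,j) then 1 else 0 :: real) = (if x = Sup i then 1 else 0) + (if y = Sup i then 1 else 0)"
    using e 1(3) by (intro sum_ind_row) auto
  have "(\<Sum>j<N2. zsum (steps (x # y # r)) (i,j)) = (\<Sum>j<N2. if e = (i,j) then 1 else 0) - (\<Sum>j<N2. zsum (steps (y # r)) (i,j))"
    by (simp add: ex sum_subtractf)
  show ?case
  proof (cases r)
    case Nil
    then show ?thesis using \<open>_ = _ - _\<close> s1 by simp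
  next
    case (Cons z r')
    have l: "linked C (y # r)" using 1(2) by simp
    have h: "(\<Sum>j<N2. zsum (steps (y # r)) (i,j)) = (if y = Sup i then 1 else 0) + (-1)^length (y#r) * (if last (y#r) = Sup i then 1 else 0)"
      using 1(1)[OF l 1(3)] Cons by simp
    have "last (x # y # r) = last (y # r)" "hd (x # y # r) = x" "length (x # y # r) = Suc (length (y # r))" by simp_all
    then show ?thesis unfolding \<open>_ = _ - _\<close> s1 h power_Suc by (simp add: algebra_simps)
  qed
qed auto

lemma colsum:
  "linked C w \<Longrightarrow> C \<subseteq> {..<N1} \<times> {..<N2} \<Longrightarrow> 2 \<le> length w \<Longrightarrow>
   (\<Sum>i<N1. zsum (steps w) (i,j)) = (if hd w = Dem j then 1 else 0) + (-1)^length w * (if last w = Dem j then 1 else 0)"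
proof (induction C w rule: linked.induct)
  case (1 C x y r)
  then obtain e where e: "e \<in> C" "links e x y" by auto
  have ex: "edge x y = e" using e(2) by (rule links_edge)
  have s1: "(\<Sum>i<N1. if e = (i,j) then 1 else 0 :: real) = (if x = Dem j then 1 else 0) + (if y = Dem j then 1 else 0)"
    using e 1(3) by (intro sum_ind_col) auto
  have "(\<Sum>i<N1. zsum (steps (x # y # r)) (i,j)) = (\<Sum>i<N1. if e = (i,j) then 1 else 0) - (\<Sum>i<N1. zsum (steps (y # r)) (i,j))"
    by (simp add: ex sum_subtractf)
  show ?case
  proof (cases r)
    case Nil
    then show ?thesis using \<open>_ = _ - _\<close> s1 by simp
  next
    case (Cons z r')
    have l: "linked C (y # r)" using 1(2) by simp
    have h: "(\<Sum>i<N1. zsum (steps (y # r)) (i,j)) = (if y = Dem j then 1 else 0) + (-1)^length (y#r) * (if last (y#r) = Dem j then 1 else 0)"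
      using 1(1)[OF l 1(3)] Cons by simp
    have "last (x # y # r) = last (y # r)" "hd (x # y # r) = x" "length (x # y # r) = Suc (length (y # r))" by simp_all
    then show ?thesis unfolding \<open>_ = _ - _\<close> s1 h power_Suc by (simp add: algebra_simps)
  qed
qed auto


lemma closed_walk_contra:
  assumes vert: "is_vertex (TP N1 N2 u v) y"
    and lw: "linked (support N1 N2 y) W" and len: "2 \<le> length W"
    and hdW: "hd W = Dem d" and lastW: "last W = Dem d"
    and nz: "zsum (steps W) e \<noteq> 0"
  shows False
proof -
  define C where "C = support N1 N2 y"
  have Crange: "C \<subseteq> {..<N1} \<times> {..<N2}" by (auto simp: C_def support_def)
  have yTP: "y \<in> TP N1 N2 u v" using vert by (simp add: is_vertex_def)
  define z where "z = (\<lambda>i j. zsum (steps W) (i,j))"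
  define L where "L = length (steps W)"
  define E where "E = set (steps W)"
  have EC: "E \<subseteq> C" unfolding E_def C_def by (rule steps_subset[OF lw])
  have eE: "e \<in> E" using nz zsum_notin unfolding E_def by blast
  have finE: "finite E" by (simp add: E_def)
  define m where "m = Min ((\<lambda>p. y (fst p) (snd p)) ` E)"
  have ypos: "\<And>p. p \<in> E \<Longrightarrow> y (fst p) (snd p) > 0" using EC by (auto simp: C_def support_def)
  have mle: "\<And>p. p \<in> E \<Longrightarrow> m \<le> y (fst p) (snd p)" unfolding m_def using finE by (intro Min_le) auto
  have mpos: "m > 0" unfolding m_def using finE eE ypos by (subst Min_gr_iff) auto
  define \<epsilon> where "\<epsilon> = m / (real L + 1)"
  have epos: "\<epsilon> > 0" using mpos by (simp add: \<epsilon>_def)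
  have zout: "\<And>i j. (i,j) \<notin> E \<Longrightarrow> z i j = 0" unfolding z_def E_def by (rule zsum_notin)
  have key: "\<And>i j. \<bar>\<epsilon> * z i j\<bar> \<le> y i j"
  proof -
    fix i j
    show "\<bar>\<epsilon> * z i j\<bar> \<le> y i j"
    proof (cases "(i,j) \<in> E")
      case True
      have zb: "\<bar>z i j\<bar> \<le> real L" unfolding z_def L_def by (rule zsum_bound)
      have "\<bar>\<epsilon> * z i j\<bar> = \<epsilon> * \<bar>z i j\<bar>" using epos by (simp add: abs_mult)
      also have "\<dots> \<le> \<epsilon> * real L" using zb epos by (simp add: mult_left_mono)
      also have "\<dots> \<le> m"
      proof -
        have "\<epsilon> * real L = m * (real L / (real L + 1))" by (simp add: \<epsilon>_def)
        also have "\<dots> \<le> m * 1" using mpos by (intro mult_left_mono) auto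
        finally show ?thesis by simp
      qed
      also have "\<dots> \<le> y i j" using mle[OF True] by simp
      finally show ?thesis .
    next
      case False
      then have "z i j = 0" by (rule zout)
      moreover have "y i j \<ge> 0" using yTP by (simp add: TP_def)
      ultimately show ?thesis by simp
    qed
  qed
  have oddlen: "odd (length W)"
  proof -
    have lt: "length W - 1 < length W" using len by simp
    have "W \<noteq> []" using len by auto
    then have "last W = W ! (length W - 1)" by (rule last_conv_nth)
    then have "W ! (length W - 1) = Dem d" using lastW by simp
    then have "isDem (W ! (length W - 1))" by simp
    with linked_parity[OF lw lt] hdW have "even (length W - 1)" by simp
    then show ?thesis using len by (cases "length W") auto
  qed
  then have sgn: "(-1::real)^length W = -1" by simp
  have rows: "\<And>i. (\<Sum>j<N2. z i j) = 0"
    unfolding z_def using rowsum[OF lw[folded C_def] Crange len] hdW lastW sgn by simp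
  have cols: "\<And>j. (\<Sum>i<N1. z i j) = 0"
    unfolding z_def using colsum[OF lw[folded C_def] Crange len] hdW lastW sgn by simp
  have zrange: "\<And>i j. \<not> (i < N1 \<and> j < N2) \<Longrightarrow> z i j = 0"
    using zout EC Crange by blast
  define a where "a = (\<lambda>i j. y i j + \<epsilon> * z i j)"
  define b where "b = (\<lambda>i j. y i j + (-\<epsilon>) * z i j)"
  have inTP: "(\<lambda>i j. y i j + c * z i j) \<in> TP N1 N2 u v" if "\<bar>c\<bar> = \<epsilon>" for c
  proof -
    have kc: "\<bar>c * z i j\<bar> \<le> y i j" for i j using key[of i j] that by (simp add: abs_mult)
    have y1: "\<forall>i j. (i < N1 \<and> j < N2) \<or> y i j = 0" and y2: "\<forall>i<N1. (\<Sum>j<N2. y i j) = u i"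
      and y3: "\<forall>j<N2. (\<Sum>i<N1. y i j) = v j" using yTP by (auto simp: TP_def)
    have r: "(\<Sum>j<N2. y i j + c * z i j) = (\<Sum>j<N2. y i j)" for i
      by (simp add: sum.distrib sum_distrib_left[symmetric] rows)
    have cc: "(\<Sum>i<N1. y i j + c * z i j) = (\<Sum>i<N1. y i j)" for j
      by (simp add: sum.distrib sum_distrib_left[symmetric] cols)
    have nn: "y i j + c * z i j \<ge> 0" for i j using kc[of i j] by (simp add: abs_le_iff)
    have zz: "(i < N1 \<and> j < N2) \<or> y i j + c * z i j = 0" for i j
    proof (cases "i < N1 \<and> j < N2")
      case False
      then show ?thesis using y1 zrange[OF False] by auto
    qed simp
    show ?thesis unfolding TP_def using y2 y3 r cc nn zz by simp
  qed
  have aTP: "a \<in> TP N1 N2 u v" unfolding a_def using inTP[of \<epsilon>] epos by simp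
  have bTP: "b \<in> TP N1 N2 u v" unfolding b_def using inTP[of "-\<epsilon>"] epos by simp
  have "z (fst e) (snd e) \<noteq> 0" using nz by (simp add: z_def)
  then have "a (fst e) (snd e) \<noteq> b (fst e) (snd e)" using epos by (simp add: a_def b_def)
  then have ab: "a \<noteq> b" by metis
  have "y = (\<lambda>i j. (1/2) * a i j + (1 - 1/2) * b i j)"
    by (simp add: a_def b_def algebra_simps)
  then have "\<exists>a'\<in>TP N1 N2 u v. \<exists>b'\<in>TP N1 N2 u v. \<exists>t::real. 0 < t \<and> t < 1 \<and> a' \<noteq> b' \<and>
           y = (\<lambda>i j. t * a' i j + (1 - t) * b' i j)"
    using aTP bTP ab by (intro bexI[OF _ aTP] bexI[OF _ bTP] exI[of _ "1/2"]) auto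
  then show False using vert unfolding is_vertex_def by blast
qed


lemma edge_pos_dem:
  assumes "edge_pos F (Dem ds) e k"
  obtains ns where "distinct ns" "linked F ns" "hd ns = Dem ds" "1 \<le> k" "k < length ns"
    "odd k \<Longrightarrow> ns!(k-1) = Dem (snd e) \<and> ns!k = Sup (fst e)"
    "even k \<Longrightarrow> ns!(k-1) = Sup (fst e) \<and> ns!k = Dem (snd e)"
proof -
  from assms obtain ns where ns: "path_in F ns" "ns \<noteq> []" "hd ns = Dem ds" "1 \<le> k" "k < length ns"
    "links e (ns ! (k - 1)) (ns ! k)" unfolding edge_pos_def by blast
  then have d: "distinct ns" and l: "linked F ns" by (auto simp: path_in_linked)
  have lt: "k - 1 < length ns" using ns by simp
  have par: "isDem (ns ! (k-1)) \<longleftrightarrow> even (k-1)" using linked_parity[OF l lt] ns(3) by simp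
  have "odd k \<Longrightarrow> ns!(k-1) = Dem (snd e) \<and> ns!k = Sup (fst e)"
  proof -
    assume "odd k"
    then have "even (k-1)" using ns(4) by simp
    then show ?thesis using par ns(6) by (auto simp: links_def)
  qed
  moreover have "even k \<Longrightarrow> ns!(k-1) = Sup (fst e) \<and> ns!k = Dem (snd e)"
  proof -
    assume "even k"
    then have "odd (k-1)" using ns(4) by (cases k) auto
    then show ?thesis using par ns(6) by (auto simp: links_def)
  qed
  ultimately show ?thesis using that d l ns by blast
qed

lemma nth_notin_take: "distinct xs \<Longrightarrow> k < length xs \<Longrightarrow> xs ! k \<notin> set (take k xs)"
proof -
  assume d: "distinct xs" and k: "k < length xs"
  have "distinct (take (Suc k) xs)" using d by simp
  moreover have "take (Suc k) xs = take k xs @ [xs ! k]" using k by (rule take_Suc_conv_app_nth)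
  ultimately show ?thesis by simp
qed

lemma plus_minus_contra:
  assumes vert: "is_vertex (TP N1 N2 u v) y" and F: "F = support N1 N2 y"
    and pl: "plus_edge F ds e" and mi: "minus_edge F ds e"
  shows False
proof -
  obtain i j where e: "e = (i,j)" by (cases e)
  from pl obtain k where "odd k" "edge_pos F (Dem ds) e k" unfolding plus_edge_def by blast
  then obtain ns1 where n1: "distinct ns1" "linked F ns1" "hd ns1 = Dem ds" "1 \<le> k" "k < length ns1"
    "ns1!(k-1) = Dem j" "ns1!k = Sup i"
    using e by (auto elim!: edge_pos_dem)
  from mi obtain k' where "even k'" "edge_pos F (Dem ds) e k'" unfolding minus_edge_def by blast
  then obtain ns2 where n2: "distinct ns2" "linked F ns2" "hd ns2 = Dem ds" "1 \<le> k'" "k' < length ns2"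
    "ns2!(k'-1) = Sup i" "ns2!k' = Dem j"
    using e by (auto elim!: edge_pos_dem)
  have k'2: "2 \<le> k'" using \<open>even k'\<close> n2(4) by presburger
  define A where "A = take (k-1) ns1"
  define B where "B = take (k'-1) ns2"
  have t1: "take k ns1 = A @ [Dem j]"
    using take_Suc_conv_app_nth[of "k-1" ns1] n1 by (simp add: A_def)
  have t1': "take (Suc k) ns1 = A @ [Dem j, Sup i]"
    using take_Suc_conv_app_nth[of k ns1] n1 t1 by simp
  have t2: "take k' ns2 = B @ [Sup i]"
    using take_Suc_conv_app_nth[of "k'-1" ns2] n2 by (simp add: B_def)
  define W where "W = take k ns1 @ rev (take k' ns2)"
  have W': "W = (A @ [Dem j]) @ Sup i # rev B" unfolding W_def t1 t2 by simp
  have stepsW: "steps W = steps (A @ [Dem j]) @ [e] @ rev (steps (take k' ns2))"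
  proof -
    have "steps W = steps ((A @ [Dem j]) @ [Sup i]) @ steps (Sup i # rev B)"
      unfolding W' by (rule steps_app)
    also have "steps ((A @ [Dem j]) @ [Sup i]) = steps (A @ [Dem j]) @ steps [Dem j, Sup i]"
      using steps_app[of A "Dem j" "[Sup i]"] by simp
    also have "Sup i # rev B = rev (take k' ns2)" using t2 by simp
    finally show ?thesis by (simp add: steps_rev e)
  qed
  have l1: "linked F (take (Suc k) ns1)" by (rule linked_take[OF n1(2)])
  have l2: "linked F (take k' ns2)" by (rule linked_take[OF n2(2)])
  have lW: "linked F W"
  proof -
    have "linked F ((A @ [Dem j]) @ [Sup i])" using l1 t1' by simp
    moreover have "linked F (Sup i # rev B)" using l2 t2 linked_rev[of F "B @ [Sup i]"] by simp
    ultimately show ?thesis unfolding W' using linked_app by blast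
  qed
  have notA: "e \<notin> set (steps (A @ [Dem j]))"
  proof
    assume "e \<in> set (steps (A @ [Dem j]))"
    moreover have "linked F (A @ [Dem j])" using linked_take[OF n1(2), of k] t1 by simp
    ultimately have "Sup i \<in> set (A @ [Dem j])" using steps_nodes e by fastforce
    then have "ns1 ! k \<in> set (take k ns1)" using t1 n1(7) by simp
    then show False using nth_notin_take[OF n1(1) n1(5)] by simp
  qed
  have notB: "e \<notin> set (rev (steps (take k' ns2)))"
  proof
    assume "e \<in> set (rev (steps (take k' ns2)))"
    then have "Dem j \<in> set (take k' ns2)" using steps_nodes[OF l2] e by fastforce
    then show False using nth_notin_take[OF n2(1) n2(5)] n2(7) by simp
  qed
  have "zsum (steps W) e = (-1) ^ length (steps (A @ [Dem j]))"
    unfolding stepsW zsum_app using zsum_notin[OF notA] zsum_notin[OF notB] by simp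
  then have nz: "zsum (steps W) e \<noteq> 0" by simp
  have lenW: "2 \<le> length W" using n1 n2 k'2 by (simp add: W_def)
  have ne: "take k ns1 \<noteq> []" using n1 by (cases ns1) auto
  have hdW: "hd W = Dem ds" using n1 ne by (simp add: W_def hd_append2 hd_take)
  have ne2: "take k' ns2 \<noteq> []" using n2 by (cases ns2) auto
  have lastW: "last W = Dem ds" using n2 ne2 by (simp add: W_def last_rev hd_take)
  show False using closed_walk_contra[OF vert lW[unfolded F] lenW hdW lastW nz] .
qed


definition reach :: "(nat\<times>nat) set \<Rightarrow> node \<Rightarrow> node \<Rightarrow> bool" where
  "reach C s x \<longleftrightarrow> (\<exists>ns. ns \<noteq> [] \<and> distinct ns \<and> linked C ns \<and> hd ns = s \<and> last ns = x)"

lemma reach_refl: "reach C s s"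
  unfolding reach_def by (rule exI[of _ "[s]"]) simp

lemma reach_step:
  assumes r: "reach C s x" and e: "e \<in> C" "links e x x'"
  shows "reach C s x'"
proof -
  from r obtain ns where ns: "ns \<noteq> []" "distinct ns" "linked C ns" "hd ns = s" "last ns = x"
    unfolding reach_def by blast
  show ?thesis
  proof (cases "x' \<in> set ns")
    case True
    then obtain p where p: "p < length ns" "ns ! p = x'" by (auto simp: in_set_conv_nth)
    have tk: "take (Suc p) ns = take p ns @ [ns ! p]" using p(1) by (rule take_Suc_conv_app_nth)
    have "take (Suc p) ns \<noteq> []" "distinct (take (Suc p) ns)" "linked C (take (Suc p) ns)"
      "hd (take (Suc p) ns) = s" "last (take (Suc p) ns) = x'"
      using ns(1) apply simp
      using ns(2) apply simp
      using ns(3) apply (rule linked_take)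
      using ns(4) apply (simp add: hd_take)
      using tk p(2) by simp
    then show ?thesis unfolding reach_def by blast
  next
    case False
    have "ns @ [x'] \<noteq> []" "distinct (ns @ [x'])" "linked C (ns @ [x'])"
      "hd (ns @ [x']) = s" "last (ns @ [x']) = x'"
      using ns False e linked_snoc[of C ns e x'] by auto
    then show ?thesis unfolding reach_def by blast
  qed
qed

lemma connected:
  assumes yTP: "y \<in> TP N1 N2 u v"
    and upos: "\<forall>i<N1. u i > 0" and vpos: "\<forall>j<N2. v j > 0"
    and bal: "(\<Sum>i<N1. u i) = (\<Sum>j<N2. v j)"
    and nd: "non_degenerate N1 N2 u v" and s: "s < N1" and j: "j < N2"
  shows "reach (support N1 N2 y) (Sup s) (Dem j)"
proof (rule ccontr)
  assume nj: "\<not> reach (support N1 N2 y) (Sup s) (Dem j)"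
  define C where "C = support N1 N2 y"
  define R where "R = reach C (Sup s)"
  define I where "I = {i. i < N1 \<and> R (Sup i)}"
  define J where "J = {j. j < N2 \<and> R (Dem j)}"
  have yrow: "\<forall>i<N1. (\<Sum>j<N2. y i j) = u i" and ycol: "\<forall>j<N2. (\<Sum>i<N1. y i j) = v j"
    and ynn: "\<forall>i j. y i j \<ge> 0" using yTP by (auto simp: TP_def)
  have clos: "R (Sup i) \<longleftrightarrow> R (Dem j)" if "i < N1" "j < N2" "y i j > 0" for i j
  proof -
    have "(i,j) \<in> C" using that by (simp add: C_def support_def)
    moreover have "links (i,j) (Sup i) (Dem j)" "links (i,j) (Dem j) (Sup i)" by (auto simp: links_def)
    ultimately show ?thesis unfolding R_def using reach_step by metis
  qed
  have IJ: "I \<subseteq> {..<N1}" "J \<subseteq> {..<N2}" by (auto simp: I_def J_def)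
  have S1: "(\<Sum>i\<in>I. u i) = (\<Sum>i\<in>I. \<Sum>j\<in>J. y i j)"
  proof (rule sum.cong[OF refl])
    fix i assume i: "i \<in> I"
    have "u i = (\<Sum>j<N2. y i j)" using yrow i by (simp add: I_def)
    also have "\<dots> = (\<Sum>j\<in>J. y i j)"
    proof (rule sum.mono_neutral_right[symmetric, symmetric])
      show "\<forall>j\<in>{..<N2} - J. y i j = 0"
      proof
        fix j assume jj: "j \<in> {..<N2} - J"
        show "y i j = 0"
        proof (rule ccontr)
          assume "y i j \<noteq> 0"
          then have "y i j > 0" using ynn by (simp add: less_le)
          then have "R (Dem j)" using clos[of i j] i jj by (simp add: I_def)
          then show False using jj by (simp add: J_def)
        qed
      qed
    qed (use IJ in auto)
    finally show "u i = (\<Sum>j\<in>J. y i j)" .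
  qed
  have S2: "(\<Sum>j\<in>J. v j) = (\<Sum>j\<in>J. \<Sum>i\<in>I. y i j)"
  proof (rule sum.cong[OF refl])
    fix j assume jJ: "j \<in> J"
    have "v j = (\<Sum>i<N1. y i j)" using ycol jJ by (simp add: J_def)
    also have "\<dots> = (\<Sum>i\<in>I. y i j)"
    proof (rule sum.mono_neutral_right[symmetric, symmetric])
      show "\<forall>i\<in>{..<N1} - I. y i j = 0"
      proof
        fix i assume ii: "i \<in> {..<N1} - I"
        show "y i j = 0"
        proof (rule ccontr)
          assume "y i j \<noteq> 0"
          then have "y i j > 0" using ynn by (simp add: less_le)
          then have "R (Sup i)" using clos[of i j] ii jJ by (simp add: J_def)
          then show False using ii by (simp add: I_def)
        qed
      qed
    qed (use IJ in auto)
    finally show "v j = (\<Sum>i\<in>I. y i j)" .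
  qed
  have eq: "(\<Sum>i\<in>I. u i) = (\<Sum>j\<in>J. v j)" unfolding S1 S2 by (rule sum.swap)
  have sI: "s \<in> I" using s by (simp add: I_def R_def reach_refl)
  have jJ: "j \<notin> J" using nj by (simp add: J_def R_def C_def)
  have finI: "finite I" "finite J" using IJ finite_subset by auto
  have Jp: "J \<subset> {..<N2}" using IJ jJ j by auto
  show False
  proof (cases "J = {}")
    case True
    have "(\<Sum>i\<in>I. u i) > 0" using finI sI upos IJ by (intro sum_pos) auto
    then show False using eq True by simp
  next
    case Jne: False
    show False
    proof (cases "I = {..<N1}")
      case True
      have "(\<Sum>j<N2. v j) = (\<Sum>j\<in>J. v j) + (\<Sum>j\<in>{..<N2} - J. v j)"
        using IJ by (simp add: sum.subset_diff)
      moreover have "(\<Sum>j\<in>{..<N2} - J. v j) > 0" using jJ j vpos by (intro sum_pos) auto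
      ultimately show False using bal eq True by simp
    next
      case False
      then have "I \<subset> {..<N1}" using IJ by auto
      then show False using nd Jne Jp sI eq unfolding non_degenerate_def by blast
    qed
  qed
qed


theorem lemma3:
  fixes N1 N2 :: nat and u v :: "nat \<Rightarrow> real"
    and F C S :: "(nat \<times> nat) set" and ds :: nat
  assumes "N1 \<ge> 1" and "N2 \<ge> 1"
    and "\<forall>i<N1. u i > 0" and "\<forall>j<N2. v j > 0"
    and "(\<Sum>i<N1. u i) = (\<Sum>j<N2. v j)"
    and "non_degenerate N1 N2 u v"
    and "is_tree N1 N2 u v F" and "ds < N2"
    and "is_tree N1 N2 u v C" and "S \<subseteq> C \<inter> F"
    and "\<exists>s<N1. SIN F ds C S s"
  shows "\<not> (\<exists>j<N2. \<forall>i. (i, j) \<in> C \<longrightarrow> (i, j) \<in> S \<and> plus_edge F ds (i, j))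
         \<and> (\<forall>j<N2. well_connected C S j \<longrightarrow> (\<exists>i. (i, j) \<in> S \<and> minus_edge F ds (i, j)))"
proof -
  obtain yF where yF: "is_vertex (TP N1 N2 u v) yF" "F = support N1 N2 yF"
    using assms(7) unfolding is_tree_def by blast
  obtain yC where yC: "is_vertex (TP N1 N2 u v) yC" "C = support N1 N2 yC"
    using assms(9) unfolding is_tree_def by blast
  obtain s where s: "s < N1" "SIN F ds C S s" using assms(11) by blast
  have yCTP: "yC \<in> TP N1 N2 u v" using yC by (simp add: is_vertex_def)
  have key: "\<exists>i. (i, j) \<in> C \<and> odd_wrt C s (i, j)" if j: "j < N2" for j
  proof -
    have "reach C (Sup s) (Dem j)" unfolding yC(2)
      by (rule connected[OF yCTP assms(3) assms(4) assms(5) assms(6) s(1) j])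
    then obtain ns where ns: "ns \<noteq> []" "distinct ns" "linked C ns" "hd ns = Sup s" "last ns = Dem j"
      unfolding reach_def by blast
    define k where "k = length ns - 1"
    have lastk: "ns ! k = Dem j" using ns(1) ns(5) last_conv_nth[of ns] by (simp add: k_def)
    have hd0: "ns ! 0 = Sup s" using ns(1) ns(4) hd_conv_nth[of ns] by simp
    have k1: "1 \<le> k"
    proof (rule ccontr)
      assume "\<not> 1 \<le> k"
      then have "k = 0" by simp
      then show False using lastk hd0 by simp
    qed
    have klt: "k < length ns" using ns(1) by (simp add: k_def)
    obtain e where e: "e \<in> C" "links e (ns ! (k-1)) (ns ! Suc (k-1))"
      using ns(3) klt k1 unfolding linked_nth by (metis Suc_pred' less_le_trans zero_less_one)
    have e': "links e (ns ! (k-1)) (ns ! k)" using e(2) k1 by simp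
    have sj: "snd e = j" using e' lastk by (auto simp: links_def)
    have "isDem (ns ! k) \<longleftrightarrow> (isDem (hd ns) \<longleftrightarrow> even k)" by (rule linked_parity[OF ns(3) klt])
    then have ok: "odd k" using lastk ns(4) by simp
    have "path_in C ns" using ns by (simp add: path_in_linked)
    then have "edge_pos C (Sup s) e k" unfolding edge_pos_def using e(1) ns k1 klt e' by blast
    then have "odd_wrt C s e" using ok unfolding odd_wrt_def by blast
    then show ?thesis using e(1) sj by (metis prod.collapse)
  qed
  have P1: "\<not> (\<exists>j<N2. \<forall>i. (i, j) \<in> C \<longrightarrow> (i, j) \<in> S \<and> plus_edge F ds (i, j))"
  proof
    assume "\<exists>j<N2. \<forall>i. (i, j) \<in> C \<longrightarrow> (i, j) \<in> S \<and> plus_edge F ds (i, j)"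
    then obtain j where j: "j < N2" "\<forall>i. (i, j) \<in> C \<longrightarrow> (i, j) \<in> S \<and> plus_edge F ds (i, j)" by blast
    obtain i where i: "(i, j) \<in> C" "odd_wrt C s (i, j)" using key[OF j(1)] by blast
    have "(i,j) \<in> S" "plus_edge F ds (i, j)" using j(2) i(1) by auto
    moreover have "minus_edge F ds (i, j)" using s(2) i \<open>(i,j) \<in> S\<close> unfolding SIN_def by blast
    ultimately show False using plus_minus_contra[OF yF(1) yF(2)] by blast
  qed
  have P2: "\<forall>j<N2. well_connected C S j \<longrightarrow> (\<exists>i. (i, j) \<in> S \<and> minus_edge F ds (i, j))"
  proof (intro allI impI)
    fix j assume j: "j < N2" and wc: "well_connected C S j"
    obtain i where i: "(i, j) \<in> C" "odd_wrt C s (i, j)" using key[OF j] by blast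
    have "(i,j) \<in> S" using wc i(1) unfolding well_connected_def by blast
    moreover have "minus_edge F ds (i, j)" using s(2) i \<open>(i,j) \<in> S\<close> unfolding SIN_def by blast
    ultimately show "\<exists>i. (i, j) \<in> S \<and> minus_edge F ds (i, j)" by blast
  qed
  show ?thesis using P1 P2 by blast
qed

end
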